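(* Let $x_0<\dots<x_n$ and $\hat x_0<\dots<\hat x_n$ be real numbers with $\hat x_0=x_0$ and $\hat x_n=x_n$, let $\mathbf{y}\in\mathbb{R}^{n+1}$, and let $z_k=z_k(\mathbf{x},\hat{\mathbf{x}})$. Then \[ \|\mathbf{y}\mathbf{z}\|_\infty\ \le\ \sup_{x_0\le t\le x_n}\bigl|p(t;\hat{\mathbf{x}},\mathbf{y},\lambda(\mathbf{x}))-P_{\mathbf{y}}(t)\bigr|\ \le\ \Lambda(\hat{\mathbf{x}})\,\|\mathbf{y}\mathbf{z}\|_\infty, \] where $(\mathbf{y}\mathbf{z})_k=y_kz_k$. Moreover $p(t;\hat{\mathbf{x}},\mathbf{y},\lambda(\mathbf{x}))=P_{\mathbf{y}+\mathbf{y}\mathbf{z}}(t)$ for all $t$.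
   Context: $\lambda_k(\mathbf{x}):=1/\prod_{j\neq k}(x_k-x_j)$ and $\lambda(\mathbf x)=(\lambda_0(\mathbf x),\dots,\lambda_n(\mathbf x))$; $z_k(\mathbf{x},\hat{\mathbf{x}}):=(\lambda_k(\mathbf{x})-\lambda_k(\hat{\mathbf{x}}))/\lambda_k(\hat{\mathbf{x}})$. The first barycentric formula is the polynomial $p(t;\mathbf{u},\mathbf{y},\mathbf{w}):=\bigl(\prod_{k=0}^n(t-u_k)\bigr)\sum_{k=0}^n\frac{w_ky_k}{t-u_k}$ (extended by continuity at the nodes). For $\mathbf{v}\in\mathbb{R}^{n+1}$, $P_{\mathbf{v}}$ denotes the unique polynomial of degree at most $n$ with $P_{\mathbf{v}}(\hat x_k)=v_k$ for all $k$. $\Lambda(\hat{\mathbf{x}}):=\max_{t\in[x_0,x_n]}\sum_{j}|\ell_j(t)|$ with $\ell_j$ the Lagrange polynomials for the nodes $\hat{\mathbf{x}}$. *)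

theory Defs
  imports "HOL-Analysis.Analysis" "HOL-Computational_Algebra.Polynomial"
begin

text \<open>Nodes are functions nat => real, used on the index set {0..n}.\<close>

definition bary_lambda :: "nat \<Rightarrow> (nat \<Rightarrow> real) \<Rightarrow> nat \<Rightarrow> real" where
  "bary_lambda n x k = 1 / (\<Prod>j\<in>{0..n} - {k}. (x k - x j))"

definition bary_z :: "nat \<Rightarrow> (nat \<Rightarrow> real) \<Rightarrow> (nat \<Rightarrow> real) \<Rightarrow> nat \<Rightarrow> real" where
  "bary_z n x xh k = (bary_lambda n x k - bary_lambda n xh k) / bary_lambda n xh k"

text \<open>First barycentric formula, written as the polynomial it is
  (i.e. already extended by continuity at the nodes).\<close>
definition bary_p :: "nat \<Rightarrow> real \<Rightarrow> (nat \<Rightarrow> real) \<Rightarrow> (nat \<Rightarrow> real) \<Rightarrow> (nat \<Rightarrow> real) \<Rightarrow> real" where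
  "bary_p n t u y w = (\<Sum>k\<in>{0..n}. w k * y k * (\<Prod>j\<in>{0..n} - {k}. (t - u j)))"

definition interp_poly :: "nat \<Rightarrow> (nat \<Rightarrow> real) \<Rightarrow> (nat \<Rightarrow> real) \<Rightarrow> real poly" where
  "interp_poly n xh v = (THE P. degree P \<le> n \<and> (\<forall>k\<in>{0..n}. poly P (xh k) = v k))"

definition lagrange_basis :: "nat \<Rightarrow> (nat \<Rightarrow> real) \<Rightarrow> nat \<Rightarrow> real \<Rightarrow> real" where
  "lagrange_basis n xh j t = (\<Prod>i\<in>{0..n} - {j}. (t - xh i) / (xh j - xh i))"

definition lebesgue_const :: "nat \<Rightarrow> (nat \<Rightarrow> real) \<Rightarrow> real" where
  "lebesgue_const n xh =
     (SUP t\<in>{xh 0..xh n}. (\<Sum>j\<in>{0..n}. \<bar>lagrange_basis n xh j t\<bar>))"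

definition sup_norm :: "nat \<Rightarrow> (nat \<Rightarrow> real) \<Rightarrow> real" where
  "sup_norm n v = Max ((\<lambda>k. \<bar>v k\<bar>) ` {0..n})"

end

theory Submission
  imports Defs
begin

definition lpoly :: "nat \<Rightarrow> (nat \<Rightarrow> real) \<Rightarrow> (nat \<Rightarrow> real) \<Rightarrow> real poly" where
  "lpoly n xh v = (\<Sum>k\<in>{0..n}. smult (v k / (\<Prod>i\<in>{0..n} - {k}. (xh k - xh i)))
                       (\<Prod>i\<in>{0..n} - {k}. [:- xh i, 1:]))"

lemma poly_lpoly: "poly (lpoly n xh v) t = (\<Sum>k\<in>{0..n}. v k * lagrange_basis n xh k t)"
  unfolding lpoly_def lagrange_basis_def
  by (simp add: poly_sum poly_prod prod_dividef)

lemma degree_lpoly: "degree (lpoly n xh v) \<le> n"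
  unfolding lpoly_def
proof (rule degree_sum_le)
  fix k assume "k \<in> {0..n}"
  have "degree (\<Prod>i\<in>{0..n} - {k}. [:- xh i, 1:]) \<le> (\<Sum>i\<in>{0..n} - {k}. degree [:- xh i, 1:])"
    using degree_prod_sum_le[of "{0..n} - {k}" "\<lambda>i. [:- xh i, 1:]"] by (simp add: o_def)
  also have "\<dots> = card ({0..n} - {k})" by simp
  also have "\<dots> \<le> n" using \<open>k \<in> {0..n}\<close> by simp
  finally show "degree (smult (v k / (\<Prod>i\<in>{0..n} - {k}. (xh k - xh i)))
                       (\<Prod>i\<in>{0..n} - {k}. [:- xh i, 1:])) \<le> n"
    by (meson degree_smult_le order_trans)
qed simp

lemma lagrange_delta:
  assumes inj: "inj_on xh {0..n}" and "k \<le> n" "m \<le> n"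
  shows "lagrange_basis n xh k (xh m) = (if k = m then 1 else 0)"
proof (cases "k = m")
  case True
  have "(\<Prod>i\<in>{0..n} - {k}. (xh k - xh i) / (xh k - xh i)) = (\<Prod>i\<in>{0..n} - {k}. 1)"
  proof (rule prod.cong)
    fix i assume "i \<in> {0..n} - {k}"
    then have "xh k \<noteq> xh i" using inj assms by (auto dest: inj_onD)
    then show "(xh k - xh i) / (xh k - xh i) = 1" by simp
  qed simp
  then show ?thesis using True by (simp add: lagrange_basis_def)
next
  case False
  have "m \<in> {0..n} - {k}" using False assms by auto
  then have "(\<Prod>i\<in>{0..n} - {k}. (xh m - xh i) / (xh k - xh i)) = 0"
    by (intro prod_zero) auto
  then show ?thesis using False by (simp add: lagrange_basis_def)
qed

lemma poly_lpoly_node: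
  assumes inj: "inj_on xh {0..n}" and "m \<le> n"
  shows "poly (lpoly n xh v) (xh m) = v m"
proof -
  have "poly (lpoly n xh v) (xh m) = (\<Sum>k\<in>{0..n}. if k = m then v k else 0)"
    unfolding poly_lpoly by (intro sum.cong) (use lagrange_delta[OF inj] assms in auto)
  also have "\<dots> = v m" using assms by simp
  finally show ?thesis .
qed

lemma interp_eq:
  assumes inj: "inj_on xh {0..n}"
  shows "interp_poly n xh v = lpoly n xh v"
  unfolding interp_poly_def
proof (rule the_equality)
  show "degree (lpoly n xh v) \<le> n \<and> (\<forall>k\<in>{0..n}. poly (lpoly n xh v) (xh k) = v k)"
    using degree_lpoly poly_lpoly_node[OF inj] by auto
next
  fix P assume P: "degree P \<le> n \<and> (\<forall>k\<in>{0..n}. poly P (xh k) = v k)"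
  have c: "card (xh ` {0..n}) = Suc n" using card_image[OF inj] by simp
  show "P = lpoly n xh v"
    by (rule poly_eqI_degree[where A="xh ` {0..n}"])
       (use P c degree_lpoly[of n xh v] poly_lpoly_node[OF inj] in auto)
qed

lemma cont_lag: "continuous_on S (\<lambda>t. lagrange_basis n xh k t)"
  unfolding lagrange_basis_def prod_dividef divide_inverse by (intro continuous_intros)

theorem theorem2:
  fixes n :: nat and x xh y :: "nat \<Rightarrow> real"
  assumes "\<And>i j. i < j \<Longrightarrow> j \<le> n \<Longrightarrow> x i < x j"
    and "\<And>i j. i < j \<Longrightarrow> j \<le> n \<Longrightarrow> xh i < xh j"
    and "xh 0 = x 0" and "xh n = x n"
  shows "sup_norm n (\<lambda>k. y k * bary_z n x xh k)
           \<le> (SUP t\<in>{x 0..x n}. \<bar>bary_p n t xh y (bary_lambda n x) - poly (interp_poly n xh y) t\<bar>)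
       \<and> (SUP t\<in>{x 0..x n}. \<bar>bary_p n t xh y (bary_lambda n x) - poly (interp_poly n xh y) t\<bar>)
           \<le> lebesgue_const n xh * sup_norm n (\<lambda>k. y k * bary_z n x xh k)
       \<and> (\<forall>t. bary_p n t xh y (bary_lambda n x)
              = poly (interp_poly n xh (\<lambda>k. y k + y k * bary_z n x xh k)) t)"
proof -
  have neq: "xh i \<noteq> xh j" if "i \<le> n" "j \<le> n" "i \<noteq> j" for i j
    using assms(2)[of i j] assms(2)[of j i] that by (cases "i < j") auto
  have neqx: "x i \<noteq> x j" if "i \<le> n" "j \<le> n" "i \<noteq> j" for i j
    using assms(1)[of i j] assms(1)[of j i] that by (cases "i < j") auto
  have inj: "inj_on xh {0..n}" unfolding inj_on_def using neq by force
  have mono: "xh 0 \<le> xh k" "xh k \<le> xh n" if "k \<le> n" for k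
    using assms(2)[of 0 k] assms(2)[of k n] that by (cases "k = 0"; cases "k = n"; auto)+
  define w where "w k = y k * bary_z n x xh k" for k
  define g where "g t = (\<Sum>k\<in>{0..n}. w k * lagrange_basis n xh k t)" for t
  have lnz: "(\<Prod>j\<in>{0..n} - {k}. (xh k - xh j)) \<noteq> 0" if "k \<le> n" for k
    using neq that by (subst prod_zero_iff) auto
  have lnzx: "(\<Prod>j\<in>{0..n} - {k}. (x k - x j)) \<noteq> 0" if "k \<le> n" for k
    using neqx that by (subst prod_zero_iff) auto
  have bp: "bary_p n t xh y (bary_lambda n x)
      = (\<Sum>k\<in>{0..n}. (y k + w k) * lagrange_basis n xh k t)" for t
    unfolding bary_p_def
  proof (rule sum.cong)
    fix k assume k: "k \<in> {0..n}"
    define A where "A = (\<Prod>j\<in>{0..n} - {k}. (xh k - xh j))"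
    define B where "B = (\<Prod>j\<in>{0..n} - {k}. (x k - x j))"
    define C where "C = (\<Prod>j\<in>{0..n} - {k}. (t - xh j))"
    have A: "A \<noteq> 0" and B: "B \<noteq> 0" using lnz lnzx k by (auto simp: A_def B_def)
    have e1: "lagrange_basis n xh k t = C / A"
      by (simp add: lagrange_basis_def A_def C_def prod_dividef)
    have e2: "bary_lambda n x k = 1 / B" by (simp add: bary_lambda_def B_def)
    have e3: "bary_z n x xh k = (1/B - 1/A) / (1/A)"
      by (simp add: bary_z_def bary_lambda_def A_def B_def)
    show "bary_lambda n x k * y k * (\<Prod>j\<in>{0..n} - {k}. (t - xh j))
        = (y k + w k) * lagrange_basis n xh k t"
      unfolding w_def C_def[symmetric] e1 e2 e3 using A B by (simp add: field_simps)
  qed simp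
  have third: "\<forall>t. bary_p n t xh y (bary_lambda n x)
              = poly (interp_poly n xh (\<lambda>k. y k + y k * bary_z n x xh k)) t"
    using bp by (simp add: interp_eq[OF inj] poly_lpoly w_def)
  have diff: "bary_p n t xh y (bary_lambda n x) - poly (interp_poly n xh y) t = g t" for t
    by (simp add: bp interp_eq[OF inj] poly_lpoly g_def sum_subtractf[symmetric] algebra_simps)
  have le0: "x 0 \<le> x n" using mono[of 0] assms(3,4) by simp
  have contg: "continuous_on {x 0..x n} (\<lambda>t. \<bar>g t\<bar>)"
    unfolding g_def by (intro continuous_intros cont_lag)
  have bdd: "bdd_above ((\<lambda>t. \<bar>g t\<bar>) ` {x 0..x n})"
    by (intro bounded_imp_bdd_above compact_imp_bounded compact_continuous_image contg) simp
  have contL: "continuous_on {xh 0..xh n} (\<lambda>t. \<Sum>j\<in>{0..n}. \<bar>lagrange_basis n xh j t\<bar>)"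
    by (intro continuous_intros cont_lag)
  have bddL: "bdd_above ((\<lambda>t. \<Sum>j\<in>{0..n}. \<bar>lagrange_basis n xh j t\<bar>) ` {xh 0..xh n})"
    by (intro bounded_imp_bdd_above compact_imp_bounded compact_continuous_image contL) simp
  have snorm: "\<bar>w k\<bar> \<le> sup_norm n w" if "k \<le> n" for k
    unfolding sup_norm_def using that by (intro Max_ge) auto
  have first: "sup_norm n w \<le> (SUP t\<in>{x 0..x n}. \<bar>g t\<bar>)"
  proof -
    have "sup_norm n w \<in> (\<lambda>k. \<bar>w k\<bar>) ` {0..n}"
      unfolding sup_norm_def by (intro Max_in) auto
    then obtain k where k: "k \<le> n" "sup_norm n w = \<bar>w k\<bar>" by auto
    have "g (xh k) = w k"
      using poly_lpoly_node[OF inj k(1), of w] by (simp add: poly_lpoly g_def)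
    moreover have "xh k \<in> {x 0..x n}" using mono[OF k(1)] assms(3,4) by simp
    ultimately have "\<bar>w k\<bar> \<le> (SUP t\<in>{x 0..x n}. \<bar>g t\<bar>)"
      using cSUP_upper[OF _ bdd] by metis
    then show ?thesis using k by simp
  qed
  have second: "(SUP t\<in>{x 0..x n}. \<bar>g t\<bar>) \<le> lebesgue_const n xh * sup_norm n w"
  proof (rule cSUP_least)
    show "{x 0..x n} \<noteq> {}" using le0 by simp
  next
    fix t assume t: "t \<in> {x 0..x n}"
    have "\<bar>g t\<bar> \<le> (\<Sum>k\<in>{0..n}. \<bar>w k * lagrange_basis n xh k t\<bar>)"
      unfolding g_def by (rule sum_abs)
    also have "\<dots> \<le> (\<Sum>k\<in>{0..n}. sup_norm n w * \<bar>lagrange_basis n xh k t\<bar>)"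
      by (intro sum_mono) (auto simp: abs_mult intro: mult_right_mono snorm)
    also have "\<dots> = sup_norm n w * (\<Sum>k\<in>{0..n}. \<bar>lagrange_basis n xh k t\<bar>)"
      by (simp add: sum_distrib_left)
    also have "\<dots> \<le> sup_norm n w * lebesgue_const n xh"
    proof (rule mult_left_mono)
      show "(\<Sum>k\<in>{0..n}. \<bar>lagrange_basis n xh k t\<bar>) \<le> lebesgue_const n xh"
        unfolding lebesgue_const_def using t assms(3,4) by (intro cSUP_upper bddL) auto
      show "0 \<le> sup_norm n w" using snorm[of 0] by linarith
    qed
    finally show "\<bar>g t\<bar> \<le> lebesgue_const n xh * sup_norm n w" by (simp add: mult.commute)
  qed
  have w: "(\<lambda>k. y k * bary_z n x xh k) = w" by (simp add: w_def fun_eq_iff)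
  show ?thesis unfolding w diff using first second third by (simp add: w_def)
qed

end
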